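(* Let $X\in\mathbb{R}^{L\times S}$ be a matrix of location profiles, let $w_S\in\mathbb{R}^S$ and $w_L\in\mathbb{R}^L$ be weight vectors, and let $\Delta\in\mathbb{R}^{S\times S}$ and $\Sigma=\mathbf{1}_S v^T+v\mathbf{1}_S^T-\tfrac12\Delta$ (for some $v\in\mathbb{R}^S$) be as in the context, with $\Sigma$ positive definite. Let $P=I_S-\mathbf{1}_S w_S^T$ and $\tilde X=XP$. (DPCoA.) Let $U$ have as columns orthonormal eigenvectors of $D_{w_S}^{1/2}P(-\tfrac12\Delta)P^TD_{w_S}^{1/2}$ associated with its positive eigenvalues, collected in the diagonal matrix $\Lambda$, and put $Z=D_{w_S}^{-1/2}U\Lambda^{1/2}$ and $Y=XZ$. Let $r=\operatorname{rank}(Y)$, let $\Phi$ be the $r\times r$ diagonal matrix of the nonzero eigenvalues of $Y^TD_{w_L}Y$ in decreasing order, and let $F$ have as columns corresponding orthonormal eigenvectors ($F^TF=I_r$). The DPCoA location coordinates are $YF$ and the DPCoA species coordinates are $ZF$. (gPCA.) Let $\Psi$ be the diagonal matrix of the nonzero eigenvalues of $\tilde X^TD_{w_L}\tilde X\Sigma$ in decreasing order, and let $A\in\mathbb{R}^{S\times r'}$ have as columns corresponding eigenvectors normalized so that $A^T\Sigma A=I$. Then $r'=r$ and $\Psi=\Phi$. Moreover, if these nonzero eigenvalues are pairwise distinct, there is a diagonal matrix $E$ with diagonal entries in $\{+1,-1\}$ such that $$YF=\tilde X\Sigma A\,E\qquad\text{and}\qquad ZF=P\Sigma A\,E,$$ i.e.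 the location coordinates of DPCoA coincide with the gPCA coordinates $\tilde X\Sigma A$ of the triplet $(\tilde X,\Sigma,D_{w_L})$, and the DPCoA species coordinates coincide with $P\Sigma A$ (the images of the centered standard basis vectors $e_s$ under the gPCA transformation), up to the same column sign changes.
   Context: $S$ species and $L$ locations. $X\in\mathbb{R}^{L\times S}$ has nonnegative entries and each row sums to $1$ (each row is a location profile). $w_S\in\mathbb{R}^S$ and $w_L\in\mathbb{R}^L$ have strictly positive entries each summing to $1$; for a vector $w$, $D_w$ denotes the diagonal matrix with diagonal $w$, and $\mathbf{1}_m$ is the all-ones vector in $\mathbb{R}^m$. $\Delta\in\mathbb{R}^{S\times S}$ is a symmetric matrix with zero diagonal (a matrix of squared dissimilarities between species) which is Euclidean in the sense that $P(-\tfrac12\Delta)P^T$ is positive semidefinite, where $P=I_S-\mathbf{1}_Sw_S^T$. $v\in\mathbb{R}^S$ is any vector for which $\Sigma=\mathbf{1}_Sv^T+v\mathbf{1}_S^T-\tfrac12\Delta$ is positive definite. *)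

theory Defs
  imports Complex_Main "Jordan_Normal_Form.Matrix" "Jordan_Normal_Form.DL_Rank"
begin

definition ones_vec :: "nat \<Rightarrow> real vec" where
  "ones_vec n = vec n (\<lambda>_. 1)"

definition outer :: "real vec \<Rightarrow> real vec \<Rightarrow> real mat" where
  "outer x y = mat (dim_vec x) (dim_vec y) (\<lambda>(i,j). x $ i * y $ j)"

definition Dw :: "real vec \<Rightarrow> real mat" where
  "Dw w = mat_diag (dim_vec w) (\<lambda>i. w $ i)"
definition Dw_sqrt :: "real vec \<Rightarrow> real mat" where
  "Dw_sqrt w = mat_diag (dim_vec w) (\<lambda>i. sqrt (w $ i))"
definition Dw_invsqrt :: "real vec \<Rightarrow> real mat" where
  "Dw_invsqrt w = mat_diag (dim_vec w) (\<lambda>i. 1 / sqrt (w $ i))"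

definition diag_sqrt :: "real mat \<Rightarrow> real mat" where
  "diag_sqrt M = mat_diag (dim_row M) (\<lambda>i. sqrt (M $$ (i,i)))"

definition psd_mat :: "nat \<Rightarrow> real mat \<Rightarrow> bool" where
  "psd_mat n A \<longleftrightarrow> A \<in> carrier_mat n n \<and> A = transpose_mat A \<and>
     (\<forall>x \<in> carrier_vec n. 0 \<le> x \<bullet> (A *\<^sub>v x))"

definition pd_mat :: "nat \<Rightarrow> real mat \<Rightarrow> bool" where
  "pd_mat n A \<longleftrightarrow> A \<in> carrier_mat n n \<and> A = transpose_mat A \<and>
     (\<forall>x \<in> carrier_vec n. x \<noteq> 0\<^sub>v n \<longrightarrow> 0 < x \<bullet> (A *\<^sub>v x))"

definition in_col_span :: "real mat \<Rightarrow> real vec \<Rightarrow> bool" where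
  "in_col_span A x \<longleftrightarrow> (\<exists>c \<in> carrier_vec (dim_col A). x = A *\<^sub>v c)"

definition nonzero_decr_diag :: "nat \<Rightarrow> real mat \<Rightarrow> bool" where
  "nonzero_decr_diag n D \<longleftrightarrow> D \<in> carrier_mat n n \<and> diagonal_mat D \<and>
     (\<forall>i<n. D $$ (i,i) \<noteq> 0) \<and> (\<forall>i j. i < j \<longrightarrow> j < n \<longrightarrow> D $$ (j,j) \<le> D $$ (i,i))"

end

theory Submission
  imports Defs "Jordan_Normal_Form.Schur_Decomposition"
begin


definition mtr :: "'a::comm_ring_1 mat \<Rightarrow> 'a" where
  "mtr A = (\<Sum>i<dim_row A. A $$ (i,i))"

lemma mtr_comm:
  fixes A B :: "'a::comm_ring_1 mat"
  assumes "A \<in> carrier_mat n m" "B \<in> carrier_mat m n"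
  shows "mtr (A * B) = mtr (B * A)"
proof -
  have "mtr (A*B) = (\<Sum>i<n. \<Sum>j<m. A$$(i,j) * B$$(j,i))"
    using assms by (auto simp: mtr_def scalar_prod_def intro!: sum.cong simp: atLeast0LessThan)
  also have "\<dots> = (\<Sum>j<m. \<Sum>i<n. B$$(j,i) * A$$(i,j))"
    by (subst sum.swap) (simp add: mult.commute)
  also have "\<dots> = mtr (B*A)"
    using assms by (auto simp: mtr_def scalar_prod_def intro!: sum.cong simp: atLeast0LessThan)
  finally show ?thesis .
qed

lemma mtr_similar:
  fixes A B :: "'a::comm_ring_1 mat"
  assumes "similar_mat_wit A B P Q"
  shows "mtr A = mtr B"
proof -
  from assms obtain n where c: "A \<in> carrier_mat n n" "B \<in> carrier_mat n n" "P \<in> carrier_mat n n"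
     "Q \<in> carrier_mat n n" and QP: "Q * P = 1\<^sub>m n" and A: "A = P * B * Q"
    unfolding similar_mat_wit_def Let_def by auto
  have "mtr A = mtr ((P*B)*Q)" using A by simp
  also have "\<dots> = mtr (Q*(P*B))" using c by (intro mtr_comm) auto
  also have "Q*(P*B) = (Q*P)*B" using c by simp
  also have "\<dots> = B" using QP c by simp
  finally show ?thesis .
qed

lemma mtr_upper:
  fixes B :: "'a::comm_ring_1 mat"
  shows "mtr B = sum_list (diag_mat B)"
  unfolding mtr_def diag_mat_def
  by (simp add: sum_list_sum_nth atLeast0LessThan)

lemma quad_form_sum:
  fixes N :: "real mat"
  assumes "N \<in> carrier_mat n n" "x \<in> carrier_vec n"
  shows "x \<bullet> (N *\<^sub>v x) = (\<Sum>a<n. x$a * (\<Sum>b<n. N$$(a,b) * x$b))"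
  using assms by (auto simp: scalar_prod_def atLeast0LessThan intro!: sum.cong)

lemma psd_zero_diag:
  fixes N :: "real mat"
  assumes N: "N \<in> carrier_mat n n" "transpose_mat N = N"
    and psd: "\<forall>x\<in>carrier_vec n. 0 \<le> x \<bullet> (N *\<^sub>v x)"
    and d: "\<forall>i<n. N $$ (i,i) = 0"
  shows "N = 0\<^sub>m n n"
proof (rule eq_matI)
  fix i j assume ij: "i < dim_row (0\<^sub>m n n :: real mat)" "j < dim_col (0\<^sub>m n n :: real mat)"
  hence i: "i < n" and j: "j < n" by auto
  have sym: "N $$ (j,i) = N $$ (i,j)" using N i j
    by (metis carrier_matD index_transpose_mat(1))
  show "N $$ (i,j) = 0\<^sub>m n n $$ (i,j)"
  proof (cases "i = j")
    case True thus ?thesis using d i by simp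
  next
    case False
    have key: "x \<bullet> (N *\<^sub>v x) = 2 * s * N $$ (i,j)"
      if x: "x = vec n (\<lambda>l. (if l = i then 1 else 0) + (if l = j then s else 0))" for x s
    proof -
      have "x \<in> carrier_vec n" using x by simp
      have xb: "\<And>b. b < n \<Longrightarrow> x$b = (if b = i then 1 else 0) + (if b = j then s else 0)"
        using x by simp
      have inner: "(\<Sum>b<n. N$$(a,b) * x$b) = N$$(a,i) + s*N$$(a,j)" for a
      proof -
        have "(\<Sum>b<n. N$$(a,b) * x$b) = (\<Sum>b<n. (if b = i then N$$(a,b) else 0) + (if b = j then s*N$$(a,b) else 0))"
          using False by (intro sum.cong) (auto simp: xb distrib_left)
        also have "\<dots> = N$$(a,i) + s*N$$(a,j)" using i j by (simp add: sum.distrib)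
        finally show ?thesis .
      qed
      have "x \<bullet> (N *\<^sub>v x) = (\<Sum>a<n. x$a * (N$$(a,i) + s*N$$(a,j)))"
        using quad_form_sum[OF N(1) \<open>x \<in> carrier_vec n\<close>] inner by simp
      also have "\<dots> = (\<Sum>a<n. (if a = i then (N$$(a,i) + s*N$$(a,j)) else 0) + (if a = j then s*(N$$(a,i) + s*N$$(a,j)) else 0))"
        using False by (intro sum.cong) (auto simp: xb distrib_left)
      also have "\<dots> = (N$$(i,i) + s*N$$(i,j)) + s * (N$$(j,i) + s*N$$(j,j))"
        using i j by (simp add: sum.distrib)
      also have "\<dots> = 2 * s * N $$ (i,j)" using d i j sym by (simp add: algebra_simps)
      finally show ?thesis .
    qed
    have k: "0 \<le> 2 * s * N$$(i,j)" for s
    proof -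
      let ?x = "vec n (\<lambda>l. (if l = i then 1 else 0) + (if l = j then s else 0))"
      have "0 \<le> ?x \<bullet> (N *\<^sub>v ?x)" using psd vec_carrier by blast
      thus ?thesis using key[OF refl, of s] by simp
    qed
    from k[of 1] k[of "-1"] have "N$$(i,j) = 0" by simp
    thus ?thesis using i j by simp
  qed
qed (use N(1) in auto)

lemma bilin_sum:
  fixes N :: "real mat"
  assumes "N \<in> carrier_mat n n" "x \<in> carrier_vec n" "y \<in> carrier_vec n"
  shows "x \<bullet> (N *\<^sub>v y) = (\<Sum>a<n. \<Sum>b<n. x$a * N$$(a,b) * y$b)"
proof -
  have "x \<bullet> (N *\<^sub>v y) = (\<Sum>a<n. x$a * (\<Sum>b<n. N$$(a,b) * y$b))"
    using assms by (auto simp: scalar_prod_def atLeast0LessThan intro!: sum.cong)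
  also have "\<dots> = (\<Sum>a<n. \<Sum>b<n. x$a * N$$(a,b) * y$b)" by (simp add: sum_distrib_left mult.assoc)
  finally show ?thesis .
qed

lemma bilin_sym:
  fixes N :: "real mat"
  assumes N: "N \<in> carrier_mat n n" "transpose_mat N = N" and "x \<in> carrier_vec n" "y \<in> carrier_vec n"
  shows "x \<bullet> (N *\<^sub>v y) = y \<bullet> (N *\<^sub>v x)"
proof -
  have sym: "N $$ (b,a) = N $$ (a,b)" if "a < n" "b < n" for a b
    using N that by (metis carrier_matD index_transpose_mat(1))
  have "x \<bullet> (N *\<^sub>v y) = (\<Sum>a<n. \<Sum>b<n. x$a * N$$(a,b) * y$b)" using bilin_sum[OF N(1) assms(3,4)] .
  also have "\<dots> = (\<Sum>b<n. \<Sum>a<n. y$b * N$$(b,a) * x$a)"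
  proof (subst sum.swap, intro sum.cong refl)
    fix b a assume "b \<in> {..<n}" "a \<in> {..<n}"
    thus "x$a * N$$(a,b) * y$b = y$b * N$$(b,a) * x$a" using sym[of a b] by (simp add: mult_ac)
  qed
  also have "\<dots> = y \<bullet> (N *\<^sub>v x)" using bilin_sum[OF N(1) assms(4,3)] by simp
  finally show ?thesis .
qed

lemma self_scalar_pos:
  fixes x :: "real vec"
  assumes "x \<in> carrier_vec n" "x \<noteq> 0\<^sub>v n"
  shows "0 < x \<bullet> x"
proof -
  obtain i where i: "i < n" "x $ i \<noteq> 0" using assms by (metis eq_vecI carrier_vecD index_zero_vec)
  have "x \<bullet> x = (\<Sum>j\<in>{0..<n}. x$j * x$j)" using assms by (simp add: scalar_prod_def)
  also have "\<dots> > 0" by (rule sum_pos2[of _ i]) (use i in \<open>auto simp: zero_less_mult_iff\<close>)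
  finally show ?thesis .
qed

lemma psd_diag_nonneg:
  fixes N :: "real mat"
  assumes N: "N \<in> carrier_mat n n" and psd: "\<forall>x\<in>carrier_vec n. 0 \<le> x \<bullet> (N *\<^sub>v x)" and i: "i < n"
  shows "0 \<le> N $$ (i,i)"
proof -
  have "0 \<le> unit_vec n i \<bullet> (N *\<^sub>v unit_vec n i)" using psd by simp
  also have "\<dots> = N $$ (i,i)" using N i by simp
  finally show ?thesis .
qed

lemma sym_psd_pos_eig:
  fixes N :: "real mat"
  assumes N: "N \<in> carrier_mat n n" "transpose_mat N = N"
    and psd: "\<forall>x\<in>carrier_vec n. 0 \<le> x \<bullet> (N *\<^sub>v x)"
    and nz: "N \<noteq> 0\<^sub>m n n"
  shows "\<exists>x\<in>carrier_vec n. x \<noteq> 0\<^sub>v n \<and> (\<exists>c>0. N *\<^sub>v x = c \<cdot>\<^sub>v x)"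
proof -
  have "\<exists>i<n. N $$ (i,i) \<noteq> 0" using psd_zero_diag[OF N psd] nz by blast
  then obtain i0 where i0: "i0 < n" "N $$ (i0,i0) \<noteq> 0" by blast
  have trpos: "0 < mtr N"
  proof -
    have "mtr N = (\<Sum>i\<in>{..<n}. N $$ (i,i))" using N by (simp add: mtr_def)
    also have "\<dots> > 0" 
      by (rule sum_pos2[of _ i0]) (use i0 psd_diag_nonneg[OF N(1) psd] in \<open>auto simp: order.order_iff_strict\<close>)
    finally show ?thesis .
  qed
  define Nc where "Nc = map_mat complex_of_real N"
  have Nc: "Nc \<in> carrier_mat n n" using N by (simp add: Nc_def)
  obtain as where cp: "char_poly Nc = (\<Prod>a\<leftarrow>as. [:- a, 1:])" using char_poly_factorized[OF Nc] by blast
  obtain B P Q where sd: "schur_decomposition Nc as = (B,P,Q)" by (cases "schur_decomposition Nc as") auto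
  from schur_decomposition[OF Nc cp sd] have sim: "similar_mat_wit Nc B P Q" and dg: "diag_mat B = as" by auto
  have "mtr Nc = sum_list as" using mtr_similar[OF sim] mtr_upper[of B] dg by simp
  moreover have "mtr Nc = complex_of_real (mtr N)" using N by (simp add: mtr_def Nc_def)
  ultimately have "sum_list as \<noteq> 0" using trpos by auto
  moreover have z: "(\<forall>a\<in>set bs. a = (0::complex)) \<Longrightarrow> sum_list bs = 0" for bs by (induct bs) auto
  ultimately obtain a where a: "a \<in> set as" "a \<noteq> 0" by blast
  have "poly (char_poly Nc) a = 0" unfolding cp using a by (simp add: poly_prod_list prod_list_zero_iff)
  hence "eigenvalue Nc a" using eigenvalue_root_char_poly[OF Nc] by simp
  then obtain v where "eigenvector Nc v a" unfolding eigenvalue_def by blast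
  hence v: "v \<in> carrier_vec n" "v \<noteq> 0\<^sub>v n" and Nv: "Nc *\<^sub>v v = a \<cdot>\<^sub>v v"
    using Nc unfolding eigenvector_def by auto
  define re where "re = vec n (\<lambda>i. Re (v $ i))"
  define im where "im = vec n (\<lambda>i. Im (v $ i))"
  have re: "re \<in> carrier_vec n" and im: "im \<in> carrier_vec n" by (auto simp: re_def im_def)
  have comp: "(Nc *\<^sub>v v) $ i = (\<Sum>j<n. complex_of_real (N $$ (i,j)) * v $ j)" if "i < n" for i
    using that N v by (auto simp: Nc_def scalar_prod_def atLeast0LessThan intro!: sum.cong)
  have Nre: "N *\<^sub>v re = Re a \<cdot>\<^sub>v re - Im a \<cdot>\<^sub>v im"
  proof (rule eq_vecI)
    fix i assume "i < dim_vec (Re a \<cdot>\<^sub>v re - Im a \<cdot>\<^sub>v im)"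
    hence i: "i < n" by (simp add: re_def im_def)
    have "Re ((Nc *\<^sub>v v) $ i) = Re ((a \<cdot>\<^sub>v v) $ i)" using Nv by simp
    hence "(\<Sum>j<n. N $$ (i,j) * Re (v $ j)) = Re a * Re (v$i) - Im a * Im (v$i)"
      using comp[OF i] i v by (simp add: Re_sum)
    thus "(N *\<^sub>v re) $ i = (Re a \<cdot>\<^sub>v re - Im a \<cdot>\<^sub>v im) $ i"
      using i N by (auto simp: re_def im_def scalar_prod_def atLeast0LessThan)
  qed (use N in \<open>auto simp: re_def im_def\<close>)
  have Nim: "N *\<^sub>v im = Im a \<cdot>\<^sub>v re + Re a \<cdot>\<^sub>v im"
  proof (rule eq_vecI)
    fix i assume "i < dim_vec (Im a \<cdot>\<^sub>v re + Re a \<cdot>\<^sub>v im)"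
    hence i: "i < n" by (simp add: re_def im_def)
    have "Im ((Nc *\<^sub>v v) $ i) = Im ((a \<cdot>\<^sub>v v) $ i)" using Nv by simp
    hence "(\<Sum>j<n. N $$ (i,j) * Im (v $ j)) = Im a * Re (v$i) + Re a * Im (v$i)"
      using comp[OF i] i v by (simp add: Im_sum)
    thus "(N *\<^sub>v im) $ i = (Im a \<cdot>\<^sub>v re + Re a \<cdot>\<^sub>v im) $ i"
      using i N by (auto simp: re_def im_def scalar_prod_def atLeast0LessThan)
  qed (use N in \<open>auto simp: re_def im_def\<close>)
  have ri: "re \<bullet> (N *\<^sub>v im) = im \<bullet> (N *\<^sub>v re)" using bilin_sym[OF N re im] .
  have "re \<bullet> (N *\<^sub>v im) = Im a * (re \<bullet> re) + Re a * (re \<bullet> im)"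
    unfolding Nim using re im by (simp add: scalar_prod_add_distrib[of _ n])
  moreover have "im \<bullet> (N *\<^sub>v re) = Re a * (im \<bullet> re) - Im a * (im \<bullet> im)"
    unfolding Nre using re im by (simp add: scalar_prod_minus_distrib[of _ n])
  moreover have "re \<bullet> im = im \<bullet> re" using comm_scalar_prod[OF re im] .
  ultimately have eq0: "Im a * (re \<bullet> re + im \<bullet> im) = 0" using ri by (simp add: algebra_simps)
  have reim: "re \<noteq> 0\<^sub>v n \<or> im \<noteq> 0\<^sub>v n"
  proof (rule ccontr)
    assume "\<not> ?thesis"
    hence "re = 0\<^sub>v n" "im = 0\<^sub>v n" by auto
    have "v = 0\<^sub>v n"
    proof (rule eq_vecI)
      fix i assume "i < dim_vec (0\<^sub>v n :: complex vec)"
      hence i: "i < n" by simp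
      have "Re (v$i) = 0" "Im (v$i) = 0"
        using arg_cong[OF \<open>re = 0\<^sub>v n\<close>, of "\<lambda>w. w $ i"] arg_cong[OF \<open>im = 0\<^sub>v n\<close>, of "\<lambda>w. w $ i"] i
        by (auto simp: re_def im_def)
      thus "v $ i = 0\<^sub>v n $ i" using i by (simp add: complex_eq_iff)
    qed (use v in auto)
    thus False using v by simp
  qed
  have "0 \<le> re \<bullet> re" "0 \<le> im \<bullet> im" by (simp_all add: scalar_prod_def sum_nonneg)
  moreover have "0 < re \<bullet> re \<or> 0 < im \<bullet> im" using reim self_scalar_pos re im by blast
  ultimately have "re \<bullet> re + im \<bullet> im \<noteq> 0" by linarith
  with eq0 have Ima: "Im a = 0" by simp
  hence Rea: "Re a \<noteq> 0" using a(2) complex_eq_iff by auto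
  have Nre': "N *\<^sub>v re = Re a \<cdot>\<^sub>v re" using Nre Ima re im by auto
  have Nim': "N *\<^sub>v im = Re a \<cdot>\<^sub>v im" using Nim Ima re im by auto
  obtain x where x: "x \<in> carrier_vec n" "x \<noteq> 0\<^sub>v n" "N *\<^sub>v x = Re a \<cdot>\<^sub>v x"
    using reim Nre' Nim' re im by blast
  have "0 \<le> x \<bullet> (N *\<^sub>v x)" using psd x by blast
  also have "\<dots> = Re a * (x \<bullet> x)" using x by simp
  finally have "0 < Re a" using self_scalar_pos[OF x(1,2)] Rea
    by (simp add: zero_le_mult_iff)
  thus ?thesis using x by blast
qed




lemma massoc: fixes A B C :: "'a::semiring_0 mat"
  shows "dim_col A = dim_row B \<Longrightarrow> dim_col B = dim_row C \<Longrightarrow> A * B * C = A * (B * C)"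
  by (rule assoc_mult_mat[of A "dim_row A" "dim_col A" B "dim_col B" C "dim_col C"]) auto

lemma mtrans: fixes A B :: "'a::comm_semiring_0 mat"
  shows "dim_col A = dim_row B \<Longrightarrow> transpose_mat (A * B) = transpose_mat B * transpose_mat A"
  by (rule transpose_mult[of A "dim_row A" "dim_col A" B "dim_col B"]) auto

lemma massoc_v: fixes A B :: "'a::semiring_0 mat"
  shows "dim_col A = dim_row B \<Longrightarrow> dim_col B = dim_vec v \<Longrightarrow> (A * B) *\<^sub>v v = A *\<^sub>v (B *\<^sub>v v)"
  by (rule assoc_mult_mat_vec[of A "dim_row A" "dim_col A" B "dim_col B" v]) auto

lemma minus_zero_mat'[simp]: fixes A :: "'a::group_add mat"
  shows "A \<in> carrier_mat n m \<Longrightarrow> A - 0\<^sub>m n m = A"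
  by (intro eq_matI) auto

lemma zero_mult_vec'[simp]: fixes x :: "'a::semiring_0 vec"
  shows "x \<in> carrier_vec m \<Longrightarrow> 0\<^sub>m n m *\<^sub>v x = 0\<^sub>v n"
  by (intro eq_vecI) (auto simp: scalar_prod_def)

lemma mult_zero_vec'[simp]: fixes A :: "'a::semiring_0 mat"
  shows "dim_col A = m \<Longrightarrow> A *\<^sub>v 0\<^sub>v m = 0\<^sub>v (dim_row A)"
  by (intro eq_vecI) (auto simp: scalar_prod_def)

lemma spec_decomp:
  fixes M U Lam :: "real mat"
  assumes M: "M \<in> carrier_mat S S" "transpose_mat M = M"
    and psd: "\<forall>x\<in>carrier_vec S. 0 \<le> x \<bullet> (M *\<^sub>v x)"
    and U: "U \<in> carrier_mat S k" "transpose_mat U * U = 1\<^sub>m k"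
    and Lam: "Lam \<in> carrier_mat k k" "transpose_mat Lam = Lam"
    and eig: "M * U = U * Lam"
    and U_all: "\<forall>x \<in> carrier_vec S. \<forall>c::real. c > 0 \<longrightarrow> M *\<^sub>v x = c \<cdot>\<^sub>v x \<longrightarrow> in_col_span U x"
  shows "M = U * Lam * transpose_mat U"
proof (rule ccontr)
  assume ne: "M \<noteq> U * Lam * transpose_mat U"
  define N where "N = M - U * Lam * transpose_mat U"
  define Pp where "Pp = 1\<^sub>m S - U * transpose_mat U"
  have dims: "dim_row M = S" "dim_col M = S" "dim_row U = S" "dim_col U = k" "dim_row Lam = k" "dim_col Lam = k"
    using M U Lam by auto
  have N: "N \<in> carrier_mat S S" unfolding N_def carrier_mat_def using M U Lam by auto
  have Pp: "Pp \<in> carrier_mat S S" unfolding Pp_def carrier_mat_def using U by auto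
  have UtU: "transpose_mat U * (U * X) = X" if "dim_row X = k" for X :: "real mat"
    using U that by (simp add: massoc[symmetric] dims)
  have NU: "N * U = 0\<^sub>m S k"
  proof -
    have "N * U = M * U - U * Lam * transpose_mat U * U"
      unfolding N_def using M U Lam by (intro minus_mult_distrib_mat) auto
    also have "U * Lam * transpose_mat U * U = U * Lam"
      using U by (simp add: massoc dims)
    finally show ?thesis using eig U Lam by simp
  qed
  have Nt: "transpose_mat N = N"
    unfolding N_def using M U Lam
    by (simp add: transpose_minus[of _ S S] mtrans dims massoc)
  have UtN: "transpose_mat U * N = 0\<^sub>m k S"
  proof -
    have "transpose_mat U * N = transpose_mat (transpose_mat N * U)"
      using U N by (simp add: mtrans)
    thus ?thesis using NU Nt by simp
  qed
  have Ncoll: "N = N * Pp"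
  proof -
    have "N * Pp = N * 1\<^sub>m S - N * (U * transpose_mat U)"
      unfolding Pp_def using N U by (intro mult_minus_distrib_mat) auto
    also have "N * (U * transpose_mat U) = 0\<^sub>m S S"
      using NU N U by (simp add: massoc[symmetric])
    finally show ?thesis using N by simp
  qed
  have Npsd: "\<forall>x\<in>carrier_vec S. 0 \<le> x \<bullet> (N *\<^sub>v x)"
  proof
    fix x :: "real vec" assume x: "x \<in> carrier_vec S"
    define y where "y = Pp *\<^sub>v x"
    have y: "y \<in> carrier_vec S" using Pp x by (simp add: y_def)
    have Nx: "N *\<^sub>v x = N *\<^sub>v y"
      unfolding y_def using Pp N x by (subst Ncoll) (simp add: massoc_v)
    have Uty: "transpose_mat U *\<^sub>v y = 0\<^sub>v k"
    proof -
      have "transpose_mat U * Pp = transpose_mat U * 1\<^sub>m S - transpose_mat U * (U * transpose_mat U)"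
        unfolding Pp_def using U by (intro mult_minus_distrib_mat) auto
      also have "\<dots> = 0\<^sub>m k S" using U UtU[of "transpose_mat U"] by simp
      finally have "transpose_mat U * Pp = 0\<^sub>m k S" .
      thus ?thesis unfolding y_def using U Pp x by (simp add: massoc_v[symmetric])
    qed
    have Ny: "N *\<^sub>v y = M *\<^sub>v y"
    proof -
      have "N *\<^sub>v y = M *\<^sub>v y - (U * Lam * transpose_mat U) *\<^sub>v y"
        unfolding N_def using M U Lam y by (intro minus_mult_distrib_mat_vec) auto
      also have "(U * Lam * transpose_mat U) *\<^sub>v y = 0\<^sub>v S"
        using U Lam y Uty by (simp add: massoc_v)
      finally show ?thesis using M y by simp
    qed
    have "x \<bullet> (N *\<^sub>v x) = y \<bullet> (N *\<^sub>v x)" using Nx bilin_sym[OF N Nt x y] by simp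
    also have "\<dots> = y \<bullet> (M *\<^sub>v y)" using Nx Ny by simp
    also have "\<dots> \<ge> 0" using psd y by blast
    finally show "0 \<le> x \<bullet> (N *\<^sub>v x)" .
  qed
  have "N \<noteq> 0\<^sub>m S S"
  proof
    assume "N = 0\<^sub>m S S"
    have "M = U * Lam * transpose_mat U"
    proof (rule eq_matI)
      fix i j assume ij: "i < dim_row (U * Lam * transpose_mat U)" "j < dim_col (U * Lam * transpose_mat U)"
      have "N $$ (i,j) = 0" using \<open>N = 0\<^sub>m S S\<close> ij dims by simp
      thus "M $$ (i,j) = (U * Lam * transpose_mat U) $$ (i,j)" unfolding N_def using ij dims by simp
    qed (use dims in auto)
    thus False using ne by simp
  qed
  from sym_psd_pos_eig[OF N Nt Npsd this] obtain x c where
    x: "x \<in> carrier_vec S" "x \<noteq> 0\<^sub>v S" and c: "c > 0" and Nx: "N *\<^sub>v x = c \<cdot>\<^sub>v x" by blast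
  have Utx: "transpose_mat U *\<^sub>v x = 0\<^sub>v k"
  proof -
    have "c \<cdot>\<^sub>v (transpose_mat U *\<^sub>v x) = transpose_mat U *\<^sub>v (N *\<^sub>v x)" using Nx U x by (simp add: mult_mat_vec[of _ k S])
    also have "\<dots> = 0\<^sub>v k" using UtN U N x by (simp add: massoc_v[symmetric])
    finally have cz: "c \<cdot>\<^sub>v (transpose_mat U *\<^sub>v x) = 0\<^sub>v k" .
    show ?thesis
    proof (rule eq_vecI)
      fix i assume "i < dim_vec (0\<^sub>v k :: real vec)"
      hence i: "i < k" by simp
      have "c * (transpose_mat U *\<^sub>v x) $ i = 0" using arg_cong[OF cz, of "\<lambda>w. w $ i"] i U by simp
      thus "(transpose_mat U *\<^sub>v x) $ i = 0\<^sub>v k $ i" using c i by simp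
    qed (use U in auto)
  qed
  have "M *\<^sub>v x = c \<cdot>\<^sub>v x"
  proof -
    have "M = N + U * Lam * transpose_mat U" unfolding N_def by (rule eq_matI) (use M U Lam in auto)
    hence "M *\<^sub>v x = N *\<^sub>v x + (U * Lam * transpose_mat U) *\<^sub>v x"
      using N U Lam x by (simp add: add_mult_distrib_mat_vec[of _ S S])
    also have "(U * Lam * transpose_mat U) *\<^sub>v x = 0\<^sub>v S" using U Lam x Utx by (simp add: massoc_v)
    finally show ?thesis using Nx x by simp
  qed
  with U_all x c obtain cc where cc: "cc \<in> carrier_vec k" "x = U *\<^sub>v cc" unfolding in_col_span_def
    using U by auto
  have "cc = transpose_mat U *\<^sub>v x" using cc U by (simp add: massoc_v[symmetric])
  hence "cc = 0\<^sub>v k" using Utx by simp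
  hence "x = 0\<^sub>v S" using cc U by simp
  thus False using x by simp
qed




lemma diag_as_mat_diag:
  fixes D :: "'a::zero mat"
  assumes "D \<in> carrier_mat n n" "diagonal_mat D"
  shows "D = mat_diag n (\<lambda>i. D $$ (i,i))"
  using assms unfolding diagonal_mat_def mat_diag_def by (intro eq_matI) auto

lemma diag_mult_left_idx:
  fixes D C :: "'a::semiring_0 mat"
  assumes "D \<in> carrier_mat n n" "diagonal_mat D" "C \<in> carrier_mat n m" "i < n" "j < m"
  shows "(D * C) $$ (i,j) = D $$ (i,i) * C $$ (i,j)"
  using assms by (subst diag_as_mat_diag[OF assms(1,2)]) (simp add: mat_diag_mult_left[of _ n m])

lemma diag_mult_right_idx:
  fixes D C :: "'a::semiring_0 mat"
  assumes "D \<in> carrier_mat m m" "diagonal_mat D" "C \<in> carrier_mat n m" "i < n" "j < m"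
  shows "(C * D) $$ (i,j) = C $$ (i,j) * D $$ (j,j)"
  using assms by (subst diag_as_mat_diag[OF assms(1,2)]) (simp add: mat_diag_mult_right[of _ n m])

lemma orth_count:
  fixes B :: "real mat"
  assumes B: "B \<in> carrier_mat m n" and BB: "transpose_mat B * B = 1\<^sub>m n"
  shows "n \<le> m"
proof (rule ccontr)
  assume "\<not> n \<le> m"
  hence mn: "m < n" by simp
  define B0 where "B0 = mat n n (\<lambda>(i,j). if i < m then B $$ (i,j) else 0)"
  have B0: "B0 \<in> carrier_mat n n" by (simp add: B0_def)
  have B0i: "B0 $$ (i,j) = (if i < m then B $$ (i,j) else 0)" if "i < n" "j < n" for i j
    using that by (simp add: B0_def)
  have "transpose_mat B0 * B0 = transpose_mat B * B"
  proof (rule eq_matI)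
    fix a b assume ab: "a < dim_row (transpose_mat B * B)" "b < dim_col (transpose_mat B * B)"
    hence a: "a < n" and b: "b < n" using B by auto
    have "(transpose_mat B0 * B0) $$ (a,b) = (\<Sum>i\<in>{0..<n}. B0 $$ (i,a) * B0 $$ (i,b))"
      using a b B0 by (simp add: scalar_prod_def)
    also have "\<dots> = (\<Sum>i\<in>{0..<m}. B $$ (i,a) * B $$ (i,b))"
    proof (rule sum.mono_neutral_cong_right)
      show "{0..<m} \<subseteq> {0..<n}" using mn by auto
      show "\<forall>i\<in>{0..<n} - {0..<m}. B0 $$ (i,a) * B0 $$ (i,b) = 0" using a b B0i by simp
      fix i assume "i \<in> {0..<m}"
      hence "i < m" "i < n" using mn by auto
      thus "B0 $$ (i,a) * B0 $$ (i,b) = B $$ (i,a) * B $$ (i,b)"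
        using B0i[of i a] B0i[of i b] a b by simp
    qed simp
    also have "\<dots> = (transpose_mat B * B) $$ (a,b)" using a b B by (simp add: scalar_prod_def)
    finally show "(transpose_mat B0 * B0) $$ (a,b) = (transpose_mat B * B) $$ (a,b)" .
  qed (use B B0 in auto)
  hence "transpose_mat B0 * B0 = 1\<^sub>m n" using BB by simp
  hence one: "B0 * transpose_mat B0 = 1\<^sub>m n" using mat_mult_left_right_inverse[of "transpose_mat B0" n B0] B0 by simp
  have "(B0 * transpose_mat B0) $$ (n-1, n-1) = (\<Sum>j\<in>{0..<n}. B0 $$ (n-1,j) * B0 $$ (n-1,j))"
    using mn B0 by (simp add: scalar_prod_def)
  also have "\<dots> = 0"
  proof (intro sum.neutral ballI)
    fix j assume "j \<in> {0..<n}"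
    hence "j < n" by simp
    moreover have "n - 1 < n" "\<not> n - 1 < m" using mn by auto
    ultimately show "B0 $$ (n-1,j) * B0 $$ (n-1,j) = 0" using B0i[of "n-1" j] by simp
  qed
  finally show False using one mn by simp
qed

lemma diag_half:
  fixes Phi Psi C :: "real mat"
  assumes Phi: "nonzero_decr_diag r Phi" and Psi: "nonzero_decr_diag r Psi"
    and C: "C \<in> carrier_mat r r" "C * transpose_mat C = 1\<^sub>m r"
    and eq: "Phi * C = C * Psi" and p: "p < r"
  shows "\<not> Psi $$ (p,p) < Phi $$ (p,p)"
proof
  assume lt: "Psi $$ (p,p) < Phi $$ (p,p)"
  from Phi have Phic: "Phi \<in> carrier_mat r r" "diagonal_mat Phi"
    and Phid: "\<forall>i j. i < j \<longrightarrow> j < r \<longrightarrow> Phi $$ (j,j) \<le> Phi $$ (i,i)" unfolding nonzero_decr_diag_def by auto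
  from Psi have Psic: "Psi \<in> carrier_mat r r" "diagonal_mat Psi"
    and Psid: "\<forall>i j. i < j \<longrightarrow> j < r \<longrightarrow> Psi $$ (j,j) \<le> Psi $$ (i,i)" unfolding nonzero_decr_diag_def by auto
  have z: "C $$ (i,j) = 0" if "i \<le> p" "p \<le> j" "j < r" for i j
  proof -
    have i: "i < r" using that p by simp
    have e: "Phi $$ (i,i) * C $$ (i,j) = C $$ (i,j) * Psi $$ (j,j)"
      using arg_cong[OF eq, of "\<lambda>A. A $$ (i,j)"] diag_mult_left_idx[OF Phic C(1) i that(3)]
        diag_mult_right_idx[OF Psic C(1) i that(3)] by simp
    moreover have "Phi $$ (p,p) \<le> Phi $$ (i,i)" using Phid that p by (cases "i = p") auto
    moreover have "Psi $$ (j,j) \<le> Psi $$ (p,p)" using Psid that by (cases "j = p") auto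
    ultimately have ne: "Phi $$ (i,i) - Psi $$ (j,j) \<noteq> 0" using lt by linarith
    have "(Phi $$ (i,i) - Psi $$ (j,j)) * C $$ (i,j) = 0" using e by (simp add: algebra_simps)
    thus ?thesis using ne by simp
  qed
  define R where "R = mat p (Suc p) (\<lambda>(a,b). C $$ (b,a))"
  have R: "R \<in> carrier_mat p (Suc p)" by (simp add: R_def)
  have "transpose_mat R * R = 1\<^sub>m (Suc p)"
  proof (rule eq_matI)
    fix a b assume ab: "a < dim_row (1\<^sub>m (Suc p) :: real mat)" "b < dim_col (1\<^sub>m (Suc p) :: real mat)"
    hence a: "a \<le> p" and b: "b \<le> p" by auto
    have "(transpose_mat R * R) $$ (a,b) = (\<Sum>i\<in>{0..<p}. C $$ (a,i) * C $$ (b,i))"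
      using a b R by (simp add: scalar_prod_def R_def)
    also have "\<dots> = (\<Sum>i\<in>{0..<r}. C $$ (a,i) * C $$ (b,i))"
      by (rule sum.mono_neutral_cong_left) (use p z a in auto)
    also have "\<dots> = (C * transpose_mat C) $$ (a,b)" using a b C(1) p by (simp add: scalar_prod_def)
    also have "\<dots> = 1\<^sub>m (Suc p) $$ (a,b)" by (subst C(2)) (use a b p in simp)
    finally show "(transpose_mat R * R) $$ (a,b) = 1\<^sub>m (Suc p) $$ (a,b)" .
  qed (use R in auto)
  from orth_count[OF R this] show False by simp
qed




lemma diag_transpose:
  fixes D :: "'a::zero mat"
  assumes "D \<in> carrier_mat n n" "diagonal_mat D"
  shows "transpose_mat D = D"
proof (rule eq_matI)
  fix i j assume "i < dim_row D" "j < dim_col D"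
  thus "transpose_mat D $$ (i,j) = D $$ (i,j)" using assms
    by (cases "i = j") (auto simp: diagonal_mat_def)
qed (use assms in auto)

lemma diag_eq:
  fixes Phi Psi C :: "real mat"
  assumes Phi: "nonzero_decr_diag r Phi" and Psi: "nonzero_decr_diag r Psi"
    and C: "C \<in> carrier_mat r r" "transpose_mat C * C = 1\<^sub>m r"
    and eq: "Phi * C = C * Psi"
  shows "Phi = Psi"
proof -
  from Phi have Phic: "Phi \<in> carrier_mat r r" "diagonal_mat Phi" unfolding nonzero_decr_diag_def by auto
  from Psi have Psic: "Psi \<in> carrier_mat r r" "diagonal_mat Psi" unfolding nonzero_decr_diag_def by auto
  have CCt: "C * transpose_mat C = 1\<^sub>m r"
    using mat_mult_left_right_inverse[of "transpose_mat C" r C] C by simp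
  have eq2: "Psi * transpose_mat C = transpose_mat C * Phi"
  proof -
    have "transpose_mat (Phi * C) = transpose_mat (C * Psi)" using eq by simp
    thus ?thesis using Phic Psic C
      by (simp add: transpose_mult[of _ r r _ r] diag_transpose)
  qed
  have Ct: "transpose_mat C \<in> carrier_mat r r" using C by simp
  have pp: "Phi $$ (p,p) = Psi $$ (p,p)" if p: "p < r" for p
    using diag_half[OF Phi Psi C(1) CCt eq p] diag_half[OF Psi Phi Ct _ eq2 p] C by simp
  show ?thesis
  proof (rule eq_matI)
    fix i j assume "i < dim_row Psi" "j < dim_col Psi"
    hence ij: "i < r" "j < r" using Psic by auto
    show "Phi $$ (i,j) = Psi $$ (i,j)"
      using pp[OF ij(1)] ij Phic Psic by (cases "i = j") (auto simp: diagonal_mat_def)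
  qed (use Phic Psic in auto)
qed

lemma cols_span:
  fixes A B :: "real mat"
  assumes B: "B \<in> carrier_mat n m" and A: "A \<in> carrier_mat n p"
    and sp: "\<forall>j<m. in_col_span A (col B j)"
  shows "\<exists>C \<in> carrier_mat p m. B = A * C"
proof -
  have "\<forall>j<m. \<exists>c. c \<in> carrier_vec p \<and> col B j = A *\<^sub>v c"
    using sp A unfolding in_col_span_def by auto
  then obtain c where c: "\<And>j. j < m \<Longrightarrow> c j \<in> carrier_vec p \<and> col B j = A *\<^sub>v c j" by metis
  define C where "C = mat p m (\<lambda>(i,j). c j $ i)"
  have Cc: "C \<in> carrier_mat p m" by (simp add: C_def)
  have colC: "col C j = c j" if "j < m" for j
    using c[OF that] that by (intro eq_vecI) (auto simp: C_def)
  have "B = A * C"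
  proof (rule eq_matI)
    fix i j assume ij: "i < dim_row (A * C)" "j < dim_col (A * C)"
    hence i: "i < n" and j: "j < m" using A Cc by auto
    have "B $$ (i,j) = col B j $ i" using B i j by simp
    also have "\<dots> = (A *\<^sub>v c j) $ i" using c[OF j] by simp
    also have "\<dots> = row A i \<bullet> col C j" using colC[OF j] A i by simp
    also have "\<dots> = (A * C) $$ (i,j)" using A Cc i j by simp
    finally show "B $$ (i,j) = (A * C) $$ (i,j)" .
  qed (use A B Cc in auto)
  thus ?thesis using Cc by blast
qed

lemma eig_col:
  fixes H B D :: "real mat"
  assumes H: "H \<in> carrier_mat n n" and B: "B \<in> carrier_mat n m"
    and D: "D \<in> carrier_mat m m" "diagonal_mat D" and eq: "H * B = B * D" and j: "j < m"
  shows "H *\<^sub>v col B j = D $$ (j,j) \<cdot>\<^sub>v col B j"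
proof -
  have "H *\<^sub>v col B j = col (H * B) j" by (rule col_mult2[symmetric, OF H B j])
  also have "\<dots> = col (B * D) j" using eq by simp
  also have "\<dots> = D $$ (j,j) \<cdot>\<^sub>v col B j"
  proof (rule eq_vecI)
    fix i assume "i < dim_vec (D $$ (j,j) \<cdot>\<^sub>v col B j)"
    hence i: "i < n" using B by simp
    have "col (B * D) j $ i = (B * D) $$ (i,j)" by (subst index_col) (use B D i j in auto)
    also have "\<dots> = B $$ (i,j) * D $$ (j,j)" by (rule diag_mult_right_idx[OF D B i j])
    finally show "col (B * D) j $ i = (D $$ (j,j) \<cdot>\<^sub>v col B j) $ i" using B i j by simp
  qed (use B D in auto)
  finally show ?thesis .
qed

lemma diag_inv:
  fixes D :: "real mat"
  assumes D: "nonzero_decr_diag r D"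
  defines "Di \<equiv> mat_diag r (\<lambda>i. 1 / D $$ (i,i))"
  shows "D * Di = 1\<^sub>m r" "Di * D = 1\<^sub>m r" "Di \<in> carrier_mat r r" "transpose_mat Di = Di"
    "transpose_mat D = D"
proof -
  from D have Dc: "D \<in> carrier_mat r r" "diagonal_mat D" and nz: "\<forall>i<r. D $$ (i,i) \<noteq> 0"
    unfolding nonzero_decr_diag_def by auto
  show Dic: "Di \<in> carrier_mat r r" by (simp add: Di_def)
  have Did: "diagonal_mat Di" by (simp add: Di_def mat_diag_def diagonal_mat_def)
  have Dii: "Di $$ (i,j) = (if i = j then 1 / D $$ (i,i) else 0)" if "i < r" "j < r" for i j
    using that by (simp add: Di_def mat_diag_def)
  show "D * Di = 1\<^sub>m r"
  proof (rule eq_matI)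
    fix i j assume "i < dim_row (1\<^sub>m r :: real mat)" "j < dim_col (1\<^sub>m r :: real mat)"
    hence ij: "i < r" "j < r" by auto
    have "(D * Di) $$ (i,j) = D $$ (i,i) * Di $$ (i,j)" by (rule diag_mult_left_idx[OF Dc Dic ij])
    thus "(D * Di) $$ (i,j) = 1\<^sub>m r $$ (i,j)" using Dii[OF ij] nz ij by simp
  qed (use Dc Dic in auto)
  show "Di * D = 1\<^sub>m r"
  proof (rule eq_matI)
    fix i j assume "i < dim_row (1\<^sub>m r :: real mat)" "j < dim_col (1\<^sub>m r :: real mat)"
    hence ij: "i < r" "j < r" by auto
    have "(Di * D) $$ (i,j) = Di $$ (i,j) * D $$ (j,j)" by (rule diag_mult_right_idx[OF Dc Dic ij])
    thus "(Di * D) $$ (i,j) = 1\<^sub>m r $$ (i,j)" using Dii[OF ij] nz ij by auto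
  qed (use Dc Dic in auto)
  show "transpose_mat Di = Di" using diag_transpose[OF Dic Did] .
  show "transpose_mat D = D" using diag_transpose[OF Dc] .
qed




lemma core:
  fixes K Z Pm Sig F Phi A Psi G H :: "real mat"
  assumes K: "K \<in> carrier_mat S S" "transpose_mat K = K"
    and Z: "Z \<in> carrier_mat S k" and Pm: "Pm \<in> carrier_mat S S"
    and Sig: "Sig \<in> carrier_mat S S" "transpose_mat Sig = Sig"
    and ZZ: "Z * transpose_mat Z = Pm * Sig * transpose_mat Pm"
    and G: "G = transpose_mat Z * K * Z"
    and H: "H = transpose_mat Pm * K * Pm * Sig"
    and Phi: "nonzero_decr_diag r Phi"
    and F: "F \<in> carrier_mat k r" "transpose_mat F * F = 1\<^sub>m r"
    and F_eig: "G * F = F * Phi"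
    and F_all: "\<forall>x\<in>carrier_vec k. \<forall>c::real. c \<noteq> 0 \<longrightarrow> G *\<^sub>v x = c \<cdot>\<^sub>v x \<longrightarrow> in_col_span F x"
    and Psi: "nonzero_decr_diag r' Psi"
    and A: "A \<in> carrier_mat S r'" "transpose_mat A * Sig * A = 1\<^sub>m r'"
    and A_eig: "H * A = A * Psi"
    and A_all: "\<forall>x\<in>carrier_vec S. \<forall>c::real. c \<noteq> 0 \<longrightarrow> H *\<^sub>v x = c \<cdot>\<^sub>v x \<longrightarrow> in_col_span A x"
  shows "r' = r \<and> Psi = Phi \<and> ((\<forall>i<r. \<forall>j<r. i \<noteq> j \<longrightarrow> Phi $$ (i,i) \<noteq> Phi $$ (j,j)) \<longrightarrow>
      (\<exists>E. E \<in> carrier_mat r r \<and> diagonal_mat E \<and> (\<forall>i<r. E $$ (i,i) = 1 \<or> E $$ (i,i) = -1) \<and>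
           Z * F = Pm * Sig * A * E))"
proof -
  define Phinv where "Phinv = mat_diag r (\<lambda>i. 1 / Phi $$ (i,i))"
  define Psinv where "Psinv = mat_diag r' (\<lambda>i. 1 / Psi $$ (i,i))"
  note PhiI = diag_inv[OF Phi, folded Phinv_def]
  note PsiI = diag_inv[OF Psi, folded Psinv_def]
  have Phic: "Phi \<in> carrier_mat r r" "diagonal_mat Phi" and Phinz: "\<forall>i<r. Phi $$ (i,i) \<noteq> 0"
    using Phi unfolding nonzero_decr_diag_def by auto
  have Psic: "Psi \<in> carrier_mat r' r'" "diagonal_mat Psi"
    using Psi unfolding nonzero_decr_diag_def by auto
  have Gc: "G \<in> carrier_mat k k" using G K Z unfolding carrier_mat_def by simp
  have Hc: "H \<in> carrier_mat S S" using H K Pm Sig unfolding carrier_mat_def by simp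
  have d: "dim_row K = S" "dim_col K = S" "dim_row Z = S" "dim_col Z = k" "dim_row Pm = S" "dim_col Pm = S"
    "dim_row Sig = S" "dim_col Sig = S" "dim_row F = k" "dim_col F = r" "dim_row A = S" "dim_col A = r'"
    "dim_row Phi = r" "dim_col Phi = r" "dim_row Psi = r'" "dim_col Psi = r'"
    "dim_row Phinv = r" "dim_col Phinv = r" "dim_row Psinv = r'" "dim_col Psinv = r'"
    "dim_row G = k" "dim_col G = k" "dim_row H = S" "dim_col H = S"
    using K Z Pm Sig F A Phic Psic PhiI(3) PsiI(3) Gc Hc by auto
  note [simp] = d K(2) Sig(2) PhiI(4,5) PsiI(4,5)
  have E1: "Z * (transpose_mat Z * W) = Pm * (Sig * (transpose_mat Pm * W))" if "dim_row W = S" for W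
  proof -
    have "Z * (transpose_mat Z * W) = (Z * transpose_mat Z) * W" using that by (simp add: massoc)
    also have "\<dots> = Pm * (Sig * (transpose_mat Pm * W))" using that by (simp add: ZZ massoc)
    finally show ?thesis .
  qed
  have E2: "transpose_mat Z * (K * (Z * F)) = F * Phi" using F_eig G by (simp add: massoc)
  have E2t: "transpose_mat Z * (K * (Z * (F * W))) = F * (Phi * W)" if "dim_row W = r" for W
  proof -
    have "transpose_mat Z * (K * (Z * (F * W))) = (transpose_mat Z * (K * (Z * F))) * W"
      using that by (simp add: massoc)
    thus ?thesis using E2 that by (simp add: massoc)
  qed
  have E3: "transpose_mat Pm * (K * (Pm * (Sig * A))) = A * Psi" using A_eig H by (simp add: massoc)
  have E3t: "transpose_mat Pm * (K * (Pm * (Sig * (A * W)))) = A * (Psi * W)" if "dim_row W = r'" for W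
  proof -
    have "transpose_mat Pm * (K * (Pm * (Sig * (A * W)))) = (transpose_mat Pm * (K * (Pm * (Sig * A)))) * W"
      using that by (simp add: massoc)
    thus ?thesis using E3 that by (simp add: massoc)
  qed
  have E6t: "transpose_mat F * (F * W) = W" if "dim_row W = r" for W
    using that F(2) by (simp add: massoc[symmetric])
  have E7: "transpose_mat A * (Sig * A) = 1\<^sub>m r'" using A(2) by (simp add: massoc)
  have E7t: "transpose_mat A * (Sig * (A * W)) = W" if "dim_row W = r'" for W
  proof -
    have "transpose_mat A * (Sig * (A * W)) = (transpose_mat A * (Sig * A)) * W" using that by (simp add: massoc)
    thus ?thesis using E7 that by simp
  qed
  have I1: "Phi * (Phinv * W) = W" "Phinv * (Phi * W) = W" if "dim_row W = r" for W
    using that PhiI(1,2) by (simp_all add: massoc[symmetric])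
  have I2: "Psi * (Psinv * W) = W" "Psinv * (Psi * W) = W" if "dim_row W = r'" for W
    using that PsiI(1,2) by (simp_all add: massoc[symmetric])
  define F' where "F' = transpose_mat Z * (K * (Pm * (Sig * (A * Psinv))))"
  have F'c: "F' \<in> carrier_mat k r'" unfolding F'_def carrier_mat_def by simp
  have ZF': "Z * F' = Pm * (Sig * A)"
    unfolding F'_def by (simp add: E1 E3t PsiI(1))
  have GF': "G * F' = F' * Psi"
    unfolding F'_def G by (simp add: massoc E1 E3t PsiI(1,2))
  have F'F': "transpose_mat F' * F' = 1\<^sub>m r'"
    unfolding F'_def by (simp add: massoc mtrans E1 E3t E3 E7t PsiI(1,2))
  have E1r: "Pm * (Sig * (transpose_mat Pm * W)) = Z * (transpose_mat Z * W)" if "dim_row W = S" for W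
    using E1[OF that] by simp
  define A' where "A' = transpose_mat Pm * (K * (Z * (F * Phinv)))"
  have A'c: "A' \<in> carrier_mat S r" unfolding A'_def carrier_mat_def by simp
  have HA': "H * A' = A' * Phi"
    unfolding A'_def H by (simp add: massoc E1r E2t PhiI(1,2))
  have A'A': "transpose_mat A' * Sig * A' = 1\<^sub>m r"
    unfolding A'_def by (simp add: massoc mtrans E1r E2t E2 E6t PhiI(1,2))
  have "\<forall>j<r. in_col_span A (col A' j)"
  proof (intro allI impI)
    fix j assume j: "j < r"
    have "H *\<^sub>v col A' j = Phi $$ (j,j) \<cdot>\<^sub>v col A' j" by (rule eig_col[OF Hc A'c Phic HA' j])
    thus "in_col_span A (col A' j)" using A_all Phinz j A'c by auto
  qed
  from cols_span[OF A'c A(1) this] obtain C1 where C1: "C1 \<in> carrier_mat r' r" and A'eq: "A' = A * C1" by blast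
  have "transpose_mat C1 * C1 = transpose_mat A' * Sig * A'"
    unfolding A'eq using C1 by (simp add: massoc mtrans E7t)
  hence "transpose_mat C1 * C1 = 1\<^sub>m r" using A'A' by simp
  from orth_count[OF C1 this] have rr1: "r \<le> r'" .
  have "\<forall>j<r'. in_col_span F (col F' j)"
  proof (intro allI impI)
    fix j assume j: "j < r'"
    have "G *\<^sub>v col F' j = Psi $$ (j,j) \<cdot>\<^sub>v col F' j" by (rule eig_col[OF Gc F'c Psic GF' j])
    moreover have "Psi $$ (j,j) \<noteq> 0" using Psi j unfolding nonzero_decr_diag_def by auto
    ultimately show "in_col_span F (col F' j)" using F_all j F'c by auto
  qed
  from cols_span[OF F'c F(1) this] obtain C2 where C2: "C2 \<in> carrier_mat r r'" and F'eq: "F' = F * C2" by blast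
  have "transpose_mat C2 * C2 = transpose_mat F' * F'"
    unfolding F'eq using C2 by (simp add: massoc mtrans E6t)
  hence C2o: "transpose_mat C2 * C2 = 1\<^sub>m r'" using F'F' by simp
  from orth_count[OF C2 this] have rr2: "r' \<le> r" .
  have rr: "r' = r" using rr1 rr2 by simp
  have PC: "Phi * C2 = C2 * Psi"
  proof -
    have "G * (F * C2) = F * C2 * Psi" using GF' F'eq by simp
    hence "transpose_mat F * (G * (F * C2)) = transpose_mat F * (F * C2 * Psi)" by simp
    moreover have "G * (F * C2) = F * (Phi * C2)" using F_eig C2 by (simp add: massoc[symmetric])
    ultimately show ?thesis using C2 by (simp add: massoc E6t)
  qed
  have Psi_r: "nonzero_decr_diag r Psi" using Psi rr by simp
  have C2r: "C2 \<in> carrier_mat r r" "transpose_mat C2 * C2 = 1\<^sub>m r" using C2 C2o rr by auto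
  have PP: "Psi = Phi" using diag_eq[OF Phi Psi_r C2r PC] by simp
  have ZFC: "Z * (F * C2) = Pm * (Sig * A)" using ZF' F'eq by simp
  have dist_imp: "\<exists>E. E \<in> carrier_mat r r \<and> diagonal_mat E \<and> (\<forall>i<r. E $$ (i,i) = 1 \<or> E $$ (i,i) = -1) \<and>
           Z * F = Pm * Sig * A * E" if dist: "\<forall>i<r. \<forall>j<r. i \<noteq> j \<longrightarrow> Phi $$ (i,i) \<noteq> Phi $$ (j,j)"
  proof -
    have PC': "Phi * C2 = C2 * Phi" using PC PP by simp
    have off: "C2 $$ (i,j) = 0" if ij: "i < r" "j < r" "i \<noteq> j" for i j
    proof -
      have "Phi $$ (i,i) * C2 $$ (i,j) = C2 $$ (i,j) * Phi $$ (j,j)"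
        using arg_cong[OF PC', of "\<lambda>X. X $$ (i,j)"] diag_mult_left_idx[OF Phic C2r(1) ij(1,2)]
          diag_mult_right_idx[OF Phic C2r(1) ij(1,2)] by simp
      hence "(Phi $$ (i,i) - Phi $$ (j,j)) * C2 $$ (i,j) = 0" by (simp add: algebra_simps)
      moreover have "Phi $$ (i,i) - Phi $$ (j,j) \<noteq> 0" using dist ij by simp
      ultimately show ?thesis by simp
    qed
    have C2d: "diagonal_mat C2" using off C2r(1) unfolding diagonal_mat_def by auto
    have pm: "C2 $$ (i,i) = 1 \<or> C2 $$ (i,i) = -1" if i: "i < r" for i
    proof -
      have "(transpose_mat C2 * C2) $$ (i,i) = (\<Sum>l\<in>{0..<r}. C2 $$ (l,i) * C2 $$ (l,i))"
        using C2r(1) i by (simp add: scalar_prod_def)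
      also have "\<dots> = (\<Sum>l\<in>{0..<r}. if l = i then C2 $$ (i,i) * C2 $$ (i,i) else 0)"
        by (rule sum.cong) (use off i in auto)
      also have "\<dots> = C2 $$ (i,i) * C2 $$ (i,i)" using i by simp
      finally have "C2 $$ (i,i) * C2 $$ (i,i) = 1" using C2r(2) i by simp
      thus ?thesis by (metis square_eq_1_iff)
    qed
    have C2t: "transpose_mat C2 = C2" using diag_transpose[OF C2r(1) C2d] .
    have CC: "C2 * C2 = 1\<^sub>m r" using C2r(2) C2t by simp
    have "Z * F = Z * (F * (C2 * C2))" using CC by simp
    also have "\<dots> = (Z * (F * C2)) * C2" using C2r(1) by (simp add: massoc)
    also have "\<dots> = Pm * Sig * A * C2" using ZFC C2r(1) by (simp add: massoc)
    finally show ?thesis using C2r(1) C2d pm by blast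
  qed
  show ?thesis using rr PP dist_imp by blast
qed




lemma outer_carrier[simp]: "outer x y \<in> carrier_mat (dim_vec x) (dim_vec y)"
  by (simp add: outer_def)

lemma outer_dims[simp]: "dim_row (outer x y) = dim_vec x" "dim_col (outer x y) = dim_vec y"
  by (simp_all add: outer_def)

lemma outer_mult_left:
  assumes "A \<in> carrier_mat n m" "x \<in> carrier_vec m"
  shows "A * outer x y = outer (A *\<^sub>v x) y"
  using assms by (intro eq_matI) (auto simp: outer_def scalar_prod_def sum_distrib_right mult.assoc)

lemma outer_mult_right:
  assumes "B \<in> carrier_mat m p" "y \<in> carrier_vec m"
  shows "outer x y * B = outer x (transpose_mat B *\<^sub>v y)"
  using assms by (intro eq_matI) (auto simp: outer_def scalar_prod_def sum_distrib_left mult_ac)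

lemma outer_zero_left[simp]: "outer (0\<^sub>v n) y = 0\<^sub>m n (dim_vec y)"
  by (intro eq_matI) (auto simp: outer_def)

lemma outer_zero_right[simp]: "outer x (0\<^sub>v n) = 0\<^sub>m (dim_vec x) n"
  by (intro eq_matI) (auto simp: outer_def)

lemma P_ones:
  fixes wS :: "real vec"
  assumes wS: "wS \<in> carrier_vec S" "(\<Sum>j<S. wS $ j) = 1"
  shows "(1\<^sub>m S - outer (ones_vec S) wS) *\<^sub>v ones_vec S = 0\<^sub>v S"
proof (rule eq_vecI)
  fix i assume "i < dim_vec (0\<^sub>v S :: real vec)"
  hence i: "i < S" by simp
  have "((1\<^sub>m S - outer (ones_vec S) wS) *\<^sub>v ones_vec S) $ i
      = (\<Sum>j\<in>{0..<S}. (if i = j then 1 else 0) - wS $ j)"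
    using i wS by (simp add: scalar_prod_def outer_def ones_vec_def)
  also have "\<dots> = 1 - (\<Sum>j\<in>{0..<S}. wS $ j)" using i by (simp add: sum_subtractf)
  also have "\<dots> = 0" using wS(2) by (simp add: atLeast0LessThan)
  finally show "((1\<^sub>m S - outer (ones_vec S) wS) *\<^sub>v ones_vec S) $ i = 0\<^sub>v S $ i" using i by simp
qed (simp add: ones_vec_def)

lemma mat_diag_cong: "(\<And>i. i < n \<Longrightarrow> f i = g i) \<Longrightarrow> mat_diag n f = mat_diag n g"
  unfolding mat_diag_def by (intro eq_matI) auto

lemma mat_diag_transpose[simp]: "transpose_mat (mat_diag n f) = mat_diag n f"
  unfolding mat_diag_def by (intro eq_matI) auto

theorem mainTheorem1:
  fixes S L k r r' :: nat
    and X Delta U Lambda F Phi A Psi :: "real mat"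
    and wS wL v :: "real vec"
  defines "P \<equiv> 1\<^sub>m S - outer (ones_vec S) wS"
    and "Sig \<equiv> outer (ones_vec S) v + outer v (ones_vec S) - (1/2) \<cdot>\<^sub>m Delta"
    and "Xt \<equiv> X * (1\<^sub>m S - outer (ones_vec S) wS)"
    and "M \<equiv> Dw_sqrt wS * (1\<^sub>m S - outer (ones_vec S) wS) * (-(1/2) \<cdot>\<^sub>m Delta)
              * transpose_mat (1\<^sub>m S - outer (ones_vec S) wS) * Dw_sqrt wS"
    and "Z \<equiv> Dw_invsqrt wS * U * diag_sqrt Lambda"
    and "Y \<equiv> X * (Dw_invsqrt wS * U * diag_sqrt Lambda)"
  assumes X: "X \<in> carrier_mat L S"
    and X_nonneg: "\<forall>i<L. \<forall>j<S. 0 \<le> X $$ (i,j)"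
    and X_rows: "\<forall>i<L. (\<Sum>j<S. X $$ (i,j)) = 1"
    and wS: "wS \<in> carrier_vec S" "\<forall>j<S. 0 < wS $ j" "(\<Sum>j<S. wS $ j) = 1"
    and wL: "wL \<in> carrier_vec L" "\<forall>i<L. 0 < wL $ i" "(\<Sum>i<L. wL $ i) = 1"
    and Delta: "Delta \<in> carrier_mat S S" "transpose_mat Delta = Delta" "\<forall>j<S. Delta $$ (j,j) = 0"
    and Delta_eucl: "psd_mat S (P * (-(1/2) \<cdot>\<^sub>m Delta) * transpose_mat P)"
    and v: "v \<in> carrier_vec S"
    and Sig_pd: "pd_mat S Sig"
    \<comment> \<open>DPCoA: U, Lambda = orthonormal eigenvectors / positive eigenvalues of M\<close>
    and U: "U \<in> carrier_mat S k" "transpose_mat U * U = 1\<^sub>m k"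
    and Lambda: "Lambda \<in> carrier_mat k k" "diagonal_mat Lambda" "\<forall>i<k. 0 < Lambda $$ (i,i)"
    and U_eig: "M * U = U * Lambda"
    and U_all: "\<forall>x \<in> carrier_vec S. \<forall>c::real. c > 0 \<longrightarrow> M *\<^sub>v x = c \<cdot>\<^sub>v x \<longrightarrow> in_col_span U x"
    \<comment> \<open>r = rank Y; Phi, F: nonzero eigenvalues (decreasing) and orthonormal eigenvectors of Y^T D_wL Y\<close>
    and r: "r = vec_space.rank L Y"
    and Phi: "nonzero_decr_diag r Phi"
    and F: "F \<in> carrier_mat k r" "transpose_mat F * F = 1\<^sub>m r"
    and F_eig: "(transpose_mat Y * Dw wL * Y) * F = F * Phi"
    and F_all: "\<forall>x \<in> carrier_vec k. \<forall>c::real. c \<noteq> 0 \<longrightarrow>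
                  (transpose_mat Y * Dw wL * Y) *\<^sub>v x = c \<cdot>\<^sub>v x \<longrightarrow> in_col_span F x"
    \<comment> \<open>gPCA: Psi, A: nonzero eigenvalues (decreasing) and Sig-normalized eigenvectors of Xt^T D_wL Xt Sig\<close>
    and Psi: "nonzero_decr_diag r' Psi"
    and A: "A \<in> carrier_mat S r'" "transpose_mat A * Sig * A = 1\<^sub>m r'"
    and A_eig: "(transpose_mat Xt * Dw wL * Xt * Sig) * A = A * Psi"
    and A_all: "\<forall>x \<in> carrier_vec S. \<forall>c::real. c \<noteq> 0 \<longrightarrow>
                  (transpose_mat Xt * Dw wL * Xt * Sig) *\<^sub>v x = c \<cdot>\<^sub>v x \<longrightarrow> in_col_span A x"
  shows "r' = r \<and> Psi = Phi \<and>
    ((\<forall>i<r. \<forall>j<r. i \<noteq> j \<longrightarrow> Phi $$ (i,i) \<noteq> Phi $$ (j,j)) \<longrightarrow>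
      (\<exists>E. E \<in> carrier_mat r r \<and> diagonal_mat E \<and> (\<forall>i<r. E $$ (i,i) = 1 \<or> E $$ (i,i) = -1) \<and>
           Y * F = Xt * Sig * A * E \<and> Z * F = P * Sig * A * E))"
proof -
  note Xc = X
  have Pc: "P \<in> carrier_mat S S" unfolding P_def carrier_mat_def using wS(1) by (simp add: ones_vec_def)
  have Pdef: "1\<^sub>m S - outer (ones_vec S) wS = P" unfolding P_def ..
  have Xt: "Xt = X * P" unfolding Xt_def Pdef ..
  have Sigc: "Sig \<in> carrier_mat S S" and Sigt: "transpose_mat Sig = Sig"
    using Sig_pd unfolding pd_mat_def by auto
  define R where "R = P * (-(1/2) \<cdot>\<^sub>m Delta) * transpose_mat P"
  have Rpsd: "R \<in> carrier_mat S S" "transpose_mat R = R" "\<forall>x\<in>carrier_vec S. 0 \<le> x \<bullet> (R *\<^sub>v x)"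
    using Delta_eucl unfolding psd_mat_def R_def by auto
  have onesc: "ones_vec S \<in> carrier_vec S" by (simp add: ones_vec_def)
  have P1: "P *\<^sub>v ones_vec S = 0\<^sub>v S" using P_ones[OF wS(1) wS(3)] Pdef by simp
  define D' where "D' = -(1/2) \<cdot>\<^sub>m Delta"
  have D'c: "D' \<in> carrier_mat S S" using Delta(1) by (simp add: D'_def)
  have vS: "dim_vec v = S" using v by simp
  have Sig_split: "Sig = outer (ones_vec S) v + outer v (ones_vec S) + D'"
    unfolding Sig_def D'_def using Delta(1) v onesc by (intro eq_matI) auto
  have PSigP: "P * Sig * transpose_mat P = R"
  proof -
    have B1: "outer (ones_vec S) v \<in> carrier_mat S S" "outer v (ones_vec S) \<in> carrier_mat S S"
      using v onesc outer_carrier by (auto simp: ones_vec_def)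
    have "P * Sig = P * outer (ones_vec S) v + P * outer v (ones_vec S) + P * D'"
      unfolding Sig_split using Pc B1 D'c
      by (simp add: mult_add_distrib_mat[of _ S S _ S] del: assoc_add_mat)
    also have "P * outer (ones_vec S) v = 0\<^sub>m S S"
      using outer_mult_left[OF Pc onesc] P1 vS by simp
    finally have PS: "P * Sig = P * outer v (ones_vec S) + P * D'" using Pc B1 D'c by simp
    have "P * Sig * transpose_mat P = P * outer v (ones_vec S) * transpose_mat P + P * D' * transpose_mat P"
      unfolding PS using Pc B1 D'c by (simp add: add_mult_distrib_mat[of _ S S])
    also have "P * outer v (ones_vec S) * transpose_mat P = P * (outer v (ones_vec S) * transpose_mat P)"
      using Pc B1 by simp
    also have "outer v (ones_vec S) * transpose_mat P = 0\<^sub>m S S"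
      using outer_mult_right[of "transpose_mat P" S S "ones_vec S" v] Pc onesc P1 vS by simp
    finally show ?thesis unfolding R_def D'_def[symmetric] using Pc D'c by simp
  qed
  define Dh where "Dh = Dw_sqrt wS"
  define Di where "Di = Dw_invsqrt wS"
  have wdim: "dim_vec wS = S" using wS(1) by simp
  have Dhc: "Dh \<in> carrier_mat S S" "transpose_mat Dh = Dh" unfolding Dh_def Dw_sqrt_def wdim by auto
  have Dic: "Di \<in> carrier_mat S S" "transpose_mat Di = Di" unfolding Di_def Dw_invsqrt_def wdim by auto
  have DiDh: "Di * Dh = 1\<^sub>m S"
    unfolding Di_def Dh_def Dw_invsqrt_def Dw_sqrt_def wdim mat_diag_diag
    by (subst mat_diag_one[symmetric], rule mat_diag_cong) (use wS(2) in \<open>auto simp: real_sqrt_gt_zero\<close>)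
  have Mdef: "M = Dh * R * Dh"
    unfolding M_def Dh_def[symmetric] R_def Pdef using Dhc Pc Delta(1) by (simp add: massoc)
  have Mc: "M \<in> carrier_mat S S" unfolding Mdef using Dhc Rpsd by simp
  have Mt: "transpose_mat M = M" unfolding Mdef using Dhc Rpsd by (simp add: mtrans massoc)
  have Mpsd: "\<forall>x\<in>carrier_vec S. 0 \<le> x \<bullet> (M *\<^sub>v x)"
  proof
    fix x :: "real vec" assume x: "x \<in> carrier_vec S"
    have "x \<bullet> (M *\<^sub>v x) = x \<bullet> (Dh *\<^sub>v (R *\<^sub>v (Dh *\<^sub>v x)))"
      unfolding Mdef using Dhc Rpsd x by (simp add: massoc_v)
    also have "\<dots> = (Dh *\<^sub>v x) \<bullet> (R *\<^sub>v (Dh *\<^sub>v x))"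
      using transpose_vec_mult_scalar[of Dh S S "R *\<^sub>v (Dh *\<^sub>v x)" x] Dhc Rpsd x
      by (simp add: comm_scalar_prod[of _ S])
    also have "\<dots> \<ge> 0" using Rpsd(3) Dhc x by simp
    finally show "0 \<le> x \<bullet> (M *\<^sub>v x)" .
  qed
  have Lt: "transpose_mat Lambda = Lambda" using diag_transpose[OF Lambda(1,2)] .
  have MU: "M = U * Lambda * transpose_mat U"
    by (rule spec_decomp[OF Mc Mt Mpsd U Lambda(1) Lt U_eig U_all])
  define Lh where "Lh = diag_sqrt Lambda"
  have Lhc: "Lh \<in> carrier_mat k k" "transpose_mat Lh = Lh" unfolding Lh_def diag_sqrt_def using Lambda(1) by auto
  have LhLh: "Lh * Lh = Lambda"
  proof -
    have "Lh * Lh = mat_diag k (\<lambda>i. Lambda $$ (i,i))"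
      unfolding Lh_def diag_sqrt_def using Lambda(1) mat_diag_diag
      by (simp, intro mat_diag_cong) (use Lambda(3) in \<open>auto simp: less_imp_le\<close>)
    thus ?thesis using diag_as_mat_diag[OF Lambda(1,2)] by simp
  qed
  have Zdef: "Z = Di * U * Lh" unfolding Z_def Di_def Lh_def ..
  have Zc: "Z \<in> carrier_mat S k" unfolding Zdef using Dic U Lhc by simp
  have ZZt: "Z * transpose_mat Z = R"
  proof -
    have "Z * transpose_mat Z = Di * (U * (Lh * Lh) * transpose_mat U) * Di"
      unfolding Zdef using Dic U Lhc by (simp add: mtrans massoc)
    also have "\<dots> = Di * M * Di" unfolding LhLh MU ..
    also have "\<dots> = (Di * Dh) * R * (Dh * Di)" unfolding Mdef using Dic Dhc Rpsd by (simp add: massoc)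
    also have "Dh * Di = 1\<^sub>m S" using DiDh Dic Dhc by (metis mat_mult_left_right_inverse)
    finally show ?thesis using DiDh Rpsd by simp
  qed
  define K where "K = transpose_mat X * Dw wL * X"
  have DLc: "Dw wL \<in> carrier_mat L L" "transpose_mat (Dw wL) = Dw wL"
    unfolding Dw_def using wL(1) by auto
  have Kc: "K \<in> carrier_mat S S" "transpose_mat K = K"
    unfolding K_def using X DLc by (auto simp: mtrans massoc)
  have Ydef: "Y = X * Z" unfolding Y_def Z_def ..
  have G: "transpose_mat Y * Dw wL * Y = transpose_mat Z * K * Z"
    unfolding Ydef K_def using X Zc DLc by (simp add: mtrans massoc)
  have H: "transpose_mat Xt * Dw wL * Xt * Sig = transpose_mat P * K * P * Sig"
    unfolding Xt K_def using X Pc DLc Sigc by (simp add: mtrans massoc)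
  note core_res = core[OF Kc Zc Pc Sigc Sigt ZZt[unfolded PSigP[symmetric]] G H Phi F F_eig F_all Psi A A_eig A_all]
  show ?thesis
  proof (intro conjI impI)
    show "r' = r" "Psi = Phi" using core_res by auto
  next
    assume dist: "\<forall>i<r. \<forall>j<r. i \<noteq> j \<longrightarrow> Phi $$ (i,i) \<noteq> Phi $$ (j,j)"
    then obtain E where E: "E \<in> carrier_mat r r" "diagonal_mat E" "\<forall>i<r. E $$ (i,i) = 1 \<or> E $$ (i,i) = -1"
      and ZF: "Z * F = P * Sig * A * E" using core_res by blast
    have rr: "r' = r" using core_res by auto
    have Ac: "A \<in> carrier_mat S r" using A(1) rr by simp
    have "Y * F = X * (Z * F)" unfolding Ydef using X Zc F(1) by simp
    also have "\<dots> = Xt * Sig * A * E" unfolding ZF Xt using X Pc Sigc Ac E(1) by (simp add: massoc)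
    finally show "\<exists>E. E \<in> carrier_mat r r \<and> diagonal_mat E \<and> (\<forall>i<r. E $$ (i,i) = 1 \<or> E $$ (i,i) = -1) \<and>
           Y * F = Xt * Sig * A * E \<and> Z * F = P * Sig * A * E" using E ZF by blast
  qed
qed


end
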